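(* Let $G^\sigma$ be a connected oriented unicyclic graph of order $n$ with girth $k$, where $n>k$. Then $sr(G^\sigma)\geq k$ if $k$ is even and $sr(G^\sigma)\geq k+1$ if $k$ is odd. This bound is sharp (it is attained, e.g., by every orientation of the graph obtained from $C_k$ by attaching $n-k$ pendant edges at one vertex of $C_k$).
   Context: An oriented graph $G^\sigma$ is a simple graph $G$ together with an orientation of each edge. Its skew-adjacency matrix $S(G^\sigma)=(s_{ij})$ has $s_{ij}=1$ if there is an arc from $v_i$ to $v_j$, $s_{ij}=-1$ if there is an arc from $v_j$ to $v_i$, and $0$ otherwise; the skew-rank $sr(G^\sigma)$ is the rank of $S(G^\sigma)$. A unicyclic graph is a connected graph with exactly one cycle; its girth is the length of that cycle. *)

theory Defs
  imports "HOL-Analysis.Analysis"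
begin

definition oriented_graph :: "('n \<Rightarrow> 'n \<Rightarrow> bool) \<Rightarrow> bool" where
  "oriented_graph A \<longleftrightarrow> (\<forall>u. \<not> A u u) \<and> (\<forall>u v. A u v \<longrightarrow> \<not> A v u)"

definition underlying :: "('n \<Rightarrow> 'n \<Rightarrow> bool) \<Rightarrow> 'n \<Rightarrow> 'n \<Rightarrow> bool" where
  "underlying A u v \<longleftrightarrow> A u v \<or> A v u"

definition skew_adj :: "('n::finite \<Rightarrow> 'n \<Rightarrow> bool) \<Rightarrow> real^'n^'n" where
  "skew_adj A = (\<chi> i j. if A i j then 1 else if A j i then -1 else 0)"

definition skew_rank :: "('n::finite \<Rightarrow> 'n \<Rightarrow> bool) \<Rightarrow> nat" where
  "skew_rank A = rank (skew_adj A)"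

text \<open>Graph notions for a simple graph given by a symmetric irreflexive relation E
  on the whole (finite) vertex type.\<close>
definition connected_graph :: "('n \<Rightarrow> 'n \<Rightarrow> bool) \<Rightarrow> bool" where
  "connected_graph E \<longleftrightarrow> (\<forall>u v. E\<^sup>*\<^sup>* u v)"

definition is_cycle :: "('n \<Rightarrow> 'n \<Rightarrow> bool) \<Rightarrow> 'n list \<Rightarrow> bool" where
  "is_cycle E xs \<longleftrightarrow> length xs \<ge> 3 \<and> distinct xs \<and>
     (\<forall>i < length xs. E (xs ! i) (xs ! ((i + 1) mod length xs)))"

text \<open>The edge set of a cycle; two cycle lists denote the same cycle iff they have
  the same edge set (rotations and reflections are identified).\<close>
definition cycle_edges :: "'n list \<Rightarrow> 'n set set" where
  "cycle_edges xs = {{xs ! i, xs ! ((i + 1) mod length xs)} | i. i < length xs}"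

definition unicyclic :: "('n \<Rightarrow> 'n \<Rightarrow> bool) \<Rightarrow> bool" where
  "unicyclic E \<longleftrightarrow> connected_graph E \<and>
     (\<exists>!C. \<exists>xs. is_cycle E xs \<and> C = cycle_edges xs)"

definition girth :: "('n \<Rightarrow> 'n \<Rightarrow> bool) \<Rightarrow> nat" where
  "girth E = Min {length xs | xs. is_cycle E xs}"

definition cycle_with_pendants_at_one_vertex :: "('n \<Rightarrow> 'n \<Rightarrow> bool) \<Rightarrow> nat \<Rightarrow> bool" where
  "cycle_with_pendants_at_one_vertex E k \<longleftrightarrow>
     (\<exists>c :: nat \<Rightarrow> 'n. inj_on c {..<k} \<and>
       (\<forall>u v. E u v \<longleftrightarrow>
          (\<exists>i<k. (u = c i \<and> v = c ((i + 1) mod k)) \<or> (v = c i \<and> u = c ((i + 1) mod k))) \<or>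
          (u = c 0 \<and> v \<notin> c ` {..<k}) \<or> (v = c 0 \<and> u \<notin> c ` {..<k})))"

end

theory Submission
  imports Defs
begin


lemma rank_ge:
  fixes M :: "real^'n::finite^'n" and S :: "'n set"
  assumes H: "\<And>f. (\<forall>v. (\<Sum>u\<in>S. f u * M$u$v) = 0) \<Longrightarrow> (\<forall>u\<in>S. f u = 0)"
  shows "card S \<le> rank M"
proof -
  have inj: "inj_on (\<lambda>u. row u M) S"
  proof (rule inj_onI, rule ccontr)
    fix a b assume ab: "a \<in> S" "b \<in> S" "row a M = row b M" "a \<noteq> b"
    define f where "f = (\<lambda>u. if u = a then 1 else if u = b then -1 else (0::real))"
    have "\<forall>v. (\<Sum>u\<in>S. f u * M$u$v) = 0"
    proof
      fix v
      have "(\<Sum>u\<in>S. f u * M$u$v) = (\<Sum>u\<in>{a,b}. f u * M$u$v)"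
        by (rule sum.mono_neutral_right) (use ab in \<open>auto simp: f_def\<close>)
      also have "\<dots> = M$a$v - M$b$v" using ab by (simp add: f_def)
      also have "\<dots> = 0" using ab(3) by (metis row_def vec_lambda_beta diff_self)
      finally show "(\<Sum>u\<in>S. f u * M$u$v) = 0" .
    qed
    then have "f a = 0" using H ab by blast
    then show False by (simp add: f_def)
  qed
  let ?R = "(\<lambda>u. row u M) ` S"
  have "independent ?R"
  proof (rule independent_if_scalars_zero)
    show "finite ?R" by simp
    fix g x assume sg: "(\<Sum>y\<in>?R. g y *\<^sub>R y) = 0" and x: "x \<in> ?R"
    have "(\<Sum>u\<in>S. g (row u M) *\<^sub>R row u M) = 0" using sg by (simp add: sum.reindex[OF inj])
    then have "\<forall>v. (\<Sum>u\<in>S. g (row u M) * M$u$v) = 0"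
    proof (intro allI)
      fix v
      assume h: "(\<Sum>u\<in>S. g (row u M) *\<^sub>R row u M) = 0"
      have "(\<Sum>u\<in>S. g (row u M) *\<^sub>R row u M) $ v = 0" using h by simp
      then show "(\<Sum>u\<in>S. g (row u M) * M$u$v) = 0" by (simp add: sum_component row_def)
    qed
    then have "\<forall>u\<in>S. g (row u M) = 0" using H[of "\<lambda>u. g (row u M)"] by blast
    then show "g x = 0" using x by auto
  qed
  then have "card ?R \<le> dim (rows M)"
    by (intro independent_card_le_dim) (auto simp: rows_def)
  then show ?thesis using card_image[OF inj] by (simp add: row_rank_def)
qed

lemma rank_le:
  fixes M :: "real^'n::finite^'n"
  assumes "finite T" "\<And>i. row i M \<in> span T"
  shows "rank M \<le> card T"
  unfolding row_rank_def using assms by (intro dim_le_card) (auto simp: rows_def)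

lemma row_in_span:
  fixes M :: "real^'n::finite^'n"
  assumes "\<And>j. M$i$j \<noteq> 0 \<Longrightarrow> axis j 1 \<in> span T"
  shows "row i M \<in> span T"
proof -
  have "row i M = (\<Sum>j\<in>UNIV. (row i M $ j) *s axis j 1)" by (simp add: basis_expansion)
  also have "\<dots> \<in> span T"
  proof (rule span_sum)
    fix j show "(row i M $ j) *s axis j (1::real) \<in> span T"
      using assms[of j] by (cases "M$i$j = 0") (auto simp: row_def scalar_mult_eq_scaleR span_scale span_zero)
  qed
  finally show ?thesis .
qed


lemma mod_cases: "(n::nat) \<le> k \<Longrightarrow> n mod k = (if n = k then 0 else n)"
  by auto
lemma cyc_nb:
  fixes j k v :: nat
  assumes "j<k" "v<k" "v = Suc j mod k \<or> j = Suc v mod k"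
  shows "Suc j = v \<or> (Suc j = k \<and> v = 0) \<or> j = Suc v \<or> (Suc v = k \<and> j = 0)"
proof -
  have "Suc j mod k = (if Suc j = k then 0 else Suc j)" using assms by (intro mod_cases) simp
  moreover have "Suc v mod k = (if Suc v = k then 0 else Suc v)" using assms by (intro mod_cases) simp
  ultimately show ?thesis using assms(3) by (auto split: if_splits)
qed


lemma Suc_mod_lt: "j < k \<Longrightarrow> Suc j mod k = (if Suc j = k then 0 else Suc j)"
  by auto

lemma entry_nz: "oriented_graph A \<Longrightarrow> (skew_adj A $ u $ v \<noteq> 0) \<longleftrightarrow> underlying A u v"
  by (auto simp: skew_adj_def underlying_def oriented_graph_def)

lemma elim_step:
  fixes M :: "real^'n::finite^'n"
  assumes "\<forall>v. (\<Sum>u\<in>S. f u * M$u$v) = 0" "finite S" "u0\<in>S" "M$u0$v \<noteq> 0"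
    "\<And>u. u\<in>S \<Longrightarrow> u \<noteq> u0 \<Longrightarrow> M$u$v \<noteq> 0 \<Longrightarrow> f u = 0"
  shows "f u0 = 0"
proof -
  have "0 = (\<Sum>u\<in>S. f u * M$u$v)" using assms(1) by simp
  also have "\<dots> = f u0 * M$u0$v + (\<Sum>u\<in>S-{u0}. f u * M$u$v)"
    using assms(2,3) by (simp add: sum.remove)
  also have "(\<Sum>u\<in>S-{u0}. f u * M$u$v) = 0"
    by (rule sum.neutral) (use assms(5) in force)
  finally show ?thesis using assms(4) by simp
qed

lemma lower:
  fixes A :: "'n::finite \<Rightarrow> 'n \<Rightarrow> bool" and c :: "nat \<Rightarrow> 'n"
  assumes og: "oriented_graph A"
    and inj: "inj_on c {..<k}" and xn: "x \<notin> c ` {..<k}" and k3: "k \<ge> 3"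
    and cyc: "\<And>i j. i<k \<Longrightarrow> j<k \<Longrightarrow> underlying A (c i) (c j) \<longleftrightarrow> (j = Suc i mod k \<or> i = Suc j mod k)"
    and xadj: "\<And>j. j<k \<Longrightarrow> underlying A x (c j) \<longleftrightarrow> j = 0"
    and mo: "odd m" and mk: "m \<le> k" "k \<le> m+1"
  shows "m + 1 \<le> skew_rank A"
proof -
  define E where "E = underlying A"
  define M where "M = skew_adj A"
  have nz: "\<And>u v. M$u$v \<noteq> 0 \<longleftrightarrow> E u v" using entry_nz[OF og] by (simp add: M_def E_def)
  have sym: "\<And>u v. E u v \<longleftrightarrow> E v u" by (auto simp: E_def underlying_def)
  have irr: "\<And>u. \<not> E u u" using og by (auto simp: E_def underlying_def oriented_graph_def)
  have cyc': "\<And>i j. i<k \<Longrightarrow> j<k \<Longrightarrow> E (c i) (c j) \<longleftrightarrow> (j = Suc i mod k \<or> i = Suc j mod k)"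
    using cyc by (simp add: E_def)
  have cycN: "\<And>i j. i<k \<Longrightarrow> j<k \<Longrightarrow> E (c i) (c j) \<Longrightarrow> Suc i = j \<or> (Suc i = k \<and> j = 0) \<or> i = Suc j \<or> (Suc j = k \<and> i = 0)"
    using cyc' cyc_nb by blast
  have cycS: "\<And>i. Suc i < k \<Longrightarrow> E (c i) (c (Suc i))" using cyc' by simp
  have xadj': "\<And>j. j<k \<Longrightarrow> E (c j) x \<longleftrightarrow> j = 0" using xadj sym by (simp add: E_def)
  have xadjE: "\<And>j. j<k \<Longrightarrow> E x (c j) \<longleftrightarrow> j = 0" using xadj by (simp add: E_def)
  define S where "S = insert x (c ` {..<m})"
  have finS: "finite S" by (simp add: S_def)
  have cardS: "card S = m + 1"
  proof -
    have "inj_on c {..<m}" using inj_on_subset[OF inj, of "{..<m}"] mk by auto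
    then have "card (c ` {..<m}) = m" by (simp add: card_image)
    moreover have "x \<notin> c ` {..<m}" using xn mk by auto
    ultimately show ?thesis by (simp add: S_def)
  qed
  obtain p where mp: "m = 2*p+1" using mo by (auto elim: oddE)
  have p1: "p \<ge> 1"
  proof (rule ccontr)
    assume "\<not> p \<ge> 1" then have "p = 0" by simp
    then show False using mp mk k3 by simp
  qed
  have m3: "m \<ge> 3" using mp p1 by simp
  have "card S \<le> rank M"
  proof (rule rank_ge)
    fix f assume col: "\<forall>v. (\<Sum>u\<in>S. f u * M$u$v) = 0"
    have elimS: "\<And>u0 v. u0 \<in> S \<Longrightarrow> E u0 v \<Longrightarrow> (\<And>u. u \<in> S \<Longrightarrow> u \<noteq> u0 \<Longrightarrow> E u v \<Longrightarrow> f u = 0) \<Longrightarrow> f u0 = 0"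
      using elim_step[OF col finS] nz by blast
    have memS: "\<And>u. u \<in> S \<Longrightarrow> u = x \<or> (\<exists>j<m. u = c j)" by (auto simp: S_def)
    have cS: "\<And>j. j < m \<Longrightarrow> c j \<in> S" by (auto simp: S_def)
    have xS: "x \<in> S" by (simp add: S_def)
    have f0: "f (c 0) = 0"
    proof (rule elimS[of "c 0" x])
      show "c 0 \<in> S" using cS m3 by simp
      show "E (c 0) x" using xadj' k3 by simp
      fix u assume u: "u \<in> S" "u \<noteq> c 0" "E u x"
      from memS[OF u(1)] show "f u = 0"
      proof
        assume "u = x" then show ?thesis using u(3) irr by simp
      next
        assume "\<exists>j<m. u = c j" then obtain j where "j<m" "u = c j" by blast
        then show ?thesis using u xadj'[of j] mk by auto
      qed
    qed
    have even_part: "\<And>l. 2*l < m \<Longrightarrow> f (c (2*l)) = 0"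
    proof -
      fix l show "2*l < m \<Longrightarrow> f (c (2*l)) = 0"
      proof (induction l)
        case 0 then show ?case using f0 by simp
      next
        case (Suc l)
        have lt: "2*l+2 < m" using Suc.prems by simp
        show ?case
        proof (rule elimS[of _ "c (2*l+1)"])
          show "c (2 * Suc l) \<in> S" using cS Suc.prems by blast
          show "E (c (2 * Suc l)) (c (2*l+1))" using cycS[of "2*l+1"] sym lt mk by simp
          fix u assume u: "u \<in> S" "u \<noteq> c (2 * Suc l)" "E u (c (2*l+1))"
          show "f u = 0"
          proof (cases "u = x")
            case True
            moreover have "2*l+1 < k" using lt mk by linarith
            ultimately show ?thesis using u xadjE[of "2*l+1"] by auto
          next
            case False
            then obtain j where j: "j < m" "u = c j" using memS u by blast
            have Ej: "E (c j) (c (2*l+1))" using u j by simp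
            have jk: "j < k" "2*l+1 < k" using j lt mk by linarith+
            have "Suc j = 2*l+1 \<or> (Suc j = k \<and> 2*l+1 = 0) \<or> j = Suc (2*l+1) \<or> (Suc (2*l+1) = k \<and> j = 0)"
              using cycN[OF jk Ej] .
            moreover have "j \<noteq> 2 * Suc l" using u j by auto
            ultimately have "j = 2*l" using j(1) lt mk by arith
            then show ?thesis using Suc.IH j lt by simp
          qed
        qed
      qed
    qed
    have odd_part: "\<And>q. q < p \<Longrightarrow> f (c (2*q+1)) = 0"
    proof -
      fix q assume q: "q < p"
      then have "q \<le> p - 1" by simp
      then show "f (c (2*q+1)) = 0"
      proof (induction rule: inc_induct)
        case base
        define i where "i = 2*(p-1)+1"
        have ii: "i + 1 = m - 1" "i + 2 = m" using mp p1 unfolding i_def by simp_all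
        show ?case unfolding i_def[symmetric]
        proof (rule elimS[of _ "c (i+1)"])
          show "c i \<in> S" using cS ii by simp
          show "E (c i) (c (i+1))" using cycS[of i] ii mk by simp
          fix u assume u: "u \<in> S" "u \<noteq> c i" "E u (c (i+1))"
          show "f u = 0"
          proof (cases "u = x")
            case True
            moreover have "i+1 < k" using ii mk by linarith
            ultimately show ?thesis using u xadjE[of "i+1"] by auto
          next
            case False
            then obtain j where j: "j < m" "u = c j" using memS u by blast
            have Ej: "E (c j) (c (i+1))" using u j by simp
            have jk: "j < k" "i+1 < k" using j ii mk by linarith+
            have "Suc j = i+1 \<or> (Suc j = k \<and> i+1 = 0) \<or> j = Suc (i+1) \<or> (Suc (i+1) = k \<and> j = 0)"
              using cycN[OF jk Ej] .
            moreover have "j \<noteq> i" using u j by auto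
            ultimately have "j = 0" using j(1) ii by arith
            then show ?thesis using f0 by (simp add: j)
          qed
        qed
      next
        case (step n)
        note st = this
        define i where "i = 2*n+1"
        have ii: "i + 2 < m" using st mp p1 unfolding i_def by linarith
        show ?case unfolding i_def[symmetric]
        proof (rule elimS[of _ "c (i+1)"])
          show "c i \<in> S" using cS ii by simp
          show "E (c i) (c (i+1))" using cycS[of i] ii mk by simp
          fix u assume u: "u \<in> S" "u \<noteq> c i" "E u (c (i+1))"
          show "f u = 0"
          proof (cases "u = x")
            case True
            moreover have "i+1 < k" using ii mk by linarith
            ultimately show ?thesis using u xadjE[of "i+1"] by (auto simp: i_def)
          next
            case False
            then obtain j where j: "j < m" "u = c j" using memS u by blast
            have Ej: "E (c j) (c (i+1))" using u j by simp
            have jk: "j < k" "i+1 < k" using j ii mk by linarith+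
            have "Suc j = i+1 \<or> (Suc j = k \<and> i+1 = 0) \<or> j = Suc (i+1) \<or> (Suc (i+1) = k \<and> j = 0)"
              using cycN[OF jk Ej] .
            moreover have "j \<noteq> i" using u j by auto
            ultimately have "j = 2 * Suc n + 1" using j(1) ii mk unfolding i_def by arith
            then show ?thesis using st j by simp
          qed
        qed
      qed
    qed
    have allc: "\<And>j. j < m \<Longrightarrow> f (c j) = 0"
    proof -
      fix j assume j: "j < m"
      show "f (c j) = 0"
      proof (cases "even j")
        case True
        then obtain l where "j = 2*l" by blast
        then show ?thesis using even_part j by simp
      next
        case False
        obtain q where jq: "j = 2*q+1" using False by (auto elim: oddE)
        then have "q < p" using mp j by linarith
        then show ?thesis using odd_part jq by simp
      qed
    qed
    have fx: "f x = 0"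
    proof (rule elimS[of x "c 0"])
      show "x \<in> S" by (rule xS)
      show "E x (c 0)" using xadj k3 by (simp add: E_def)
      fix u assume u: "u \<in> S" "u \<noteq> x" "E u (c 0)"
      then obtain j where j: "j < m" "u = c j" using memS by blast
      then show "f u = 0" using allc by simp
    qed
    show "\<forall>u\<in>S. f u = 0" using memS allc fx by blast
  qed
  then show ?thesis using cardS by (simp add: skew_rank_def M_def)
qed


lemma exists_outside:
  fixes c :: "nat \<Rightarrow> 'n::finite"
  assumes "CARD('n) > k"
  obtains x where "x \<notin> c ` {..<k}"
proof -
  have "card (c ` {..<k}) \<le> k" using card_image_le[of "{..<k}" c] by simp
  then have "c ` {..<k} \<noteq> UNIV" using assms by auto
  then show ?thesis using that by blast
qed

lemma part2:
  fixes A :: "'n::finite \<Rightarrow> 'n \<Rightarrow> bool"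
  assumes og: "oriented_graph A" and k3: "k \<ge> 3" and card: "CARD('n) > k"
    and cp: "cycle_with_pendants_at_one_vertex (underlying A) k"
  shows "skew_rank A = (if even k then k else k + 1)"
proof -
  define E where "E = underlying A"
  define M where "M = skew_adj A"
  have nz: "\<And>u v. M$u$v \<noteq> 0 \<longleftrightarrow> E u v" using entry_nz[OF og] by (simp add: M_def E_def)
  obtain c where inj: "inj_on c {..<k}" and Ed: "\<And>u v. E u v \<longleftrightarrow>
          (\<exists>i<k. (u = c i \<and> v = c ((i + 1) mod k)) \<or> (v = c i \<and> u = c ((i + 1) mod k))) \<or>
          (u = c 0 \<and> v \<notin> c ` {..<k}) \<or> (v = c 0 \<and> u \<notin> c ` {..<k})"
    using cp unfolding cycle_with_pendants_at_one_vertex_def E_def by blast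
  define C where "C = c ` {..<k}"
  have k0: "0 < k" using k3 by simp
  have cinj: "\<And>i j. i < k \<Longrightarrow> j < k \<Longrightarrow> c i = c j \<longleftrightarrow> i = j" using inj by (auto dest: inj_onD)
  have modk: "\<And>i. (i + 1) mod k < k" using k0 by simp
  have cC: "\<And>i. i < k \<Longrightarrow> c i \<in> C" by (simp add: C_def)
  have out_nb: "\<And>u v. u \<notin> C \<Longrightarrow> E u v \<Longrightarrow> v = c 0"
  proof -
    fix u v assume u: "u \<notin> C" and e: "E u v"
    show "v = c 0" using e[unfolded Ed] u cC[OF k0] modk by (auto simp: C_def)
  qed
  have in_out: "\<And>i v. i < k \<Longrightarrow> v \<notin> C \<Longrightarrow> E (c i) v \<Longrightarrow> i = 0"
  proof -
    fix i v assume i: "i < k" and v: "v \<notin> C" and e: "E (c i) v"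
    have "c i = c 0" using e[unfolded Ed] v cC modk i by (auto simp: C_def)
    then show "i = 0" using cinj[of i 0] i k0 by simp
  qed
  have cyc: "\<And>i j. i<k \<Longrightarrow> j<k \<Longrightarrow> E (c i) (c j) \<longleftrightarrow> (j = Suc i mod k \<or> i = Suc j mod k)"
  proof -
    fix i j assume i: "i<k" and j: "j<k"
    have "E (c i) (c j) \<longleftrightarrow> (\<exists>i'<k. (c i = c i' \<and> c j = c ((i' + 1) mod k)) \<or> (c j = c i' \<and> c i = c ((i' + 1) mod k)))"
      using Ed[of "c i" "c j"] i j by (auto simp: C_def)
    also have "\<dots> \<longleftrightarrow> (\<exists>i'<k. (i = i' \<and> j = (i' + 1) mod k) \<or> (j = i' \<and> i = (i' + 1) mod k))"
      using cinj i j modk by (metis (no_types, lifting))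
    also have "\<dots> \<longleftrightarrow> (j = Suc i mod k \<or> i = Suc j mod k)" using i j by auto
    finally show "E (c i) (c j) \<longleftrightarrow> (j = Suc i mod k \<or> i = Suc j mod k)" .
  qed
  obtain x where xn: "x \<notin> c ` {..<k}" using exists_outside[OF card] by blast
  have xadj: "\<And>j. j<k \<Longrightarrow> underlying A x (c j) \<longleftrightarrow> j = 0"
  proof -
    fix j assume j: "j < k"
    have "E x (c j) \<longleftrightarrow> j = 0"
    proof
      assume "E x (c j)" then have "c j = c 0" using out_nb xn by (simp add: C_def)
      then show "j = 0" using cinj[of j 0] j k0 by simp
    next
      assume "j = 0" then show "E x (c j)" using Ed[of x "c j"] xn by simp
    qed
    then show "underlying A x (c j) \<longleftrightarrow> j = 0" by (simp add: E_def)
  qed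
  have cycU: "\<And>i j. i<k \<Longrightarrow> j<k \<Longrightarrow> underlying A (c i) (c j) \<longleftrightarrow> (j = Suc i mod k \<or> i = Suc j mod k)"
    using cyc by (simp add: E_def)
  show ?thesis
  proof (cases "even k")
    case True
    have lo: "k - 1 + 1 \<le> skew_rank A"
      by (rule lower[OF og inj xn k3 cycU xadj]) (use True k3 in auto)
    define T where "T = (\<lambda>i. axis (c (2*i)) (1::real)) ` {..<k div 2} \<union> (\<lambda>i. row (c (2*i)) M) ` {..<k div 2}"
    have fT: "finite T" by (simp add: T_def)
    have cT: "card T \<le> k"
    proof -
      have "card T \<le> card ((\<lambda>i. axis (c (2*i)) (1::real)) ` {..<k div 2}) + card ((\<lambda>i. row (c (2*i)) M) ` {..<k div 2})"
        unfolding T_def by (rule card_Un_le)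
      also have "\<dots> \<le> k div 2 + k div 2" by (intro add_mono card_image_le[THEN order_trans]) auto
      finally show ?thesis by simp
    qed
    have up: "rank M \<le> card T"
    proof (rule rank_le[OF fT])
      fix v
      show "row v M \<in> span T"
      proof (cases "v \<in> C")
        case False
        show ?thesis
        proof (rule row_in_span)
          fix j assume "M$v$j \<noteq> 0"
          then have "j = c (2*0)" using out_nb False nz by simp
          moreover have "0 < k div 2" using k3 by simp
          ultimately have "axis j (1::real) \<in> T" unfolding T_def by (intro UnI1 image_eqI[where x=0]) auto
          then show "axis j 1 \<in> span T" by (rule span_base)
        qed
      next
        case True
        then obtain i where i: "i < k" "v = c i" by (auto simp: C_def)
        show ?thesis
        proof (cases "even i")
          case True
          then obtain l where "i = 2*l" by blast
          moreover have "l < k div 2" using i \<open>i = 2*l\<close> \<open>even k\<close> by auto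
          ultimately show ?thesis using i by (intro span_base) (auto simp: T_def)
        next
          case False
          then obtain l where l: "i = 2*l+1" by (auto elim: oddE)
          show ?thesis
          proof (rule row_in_span)
            fix w assume "M$v$w \<noteq> 0"
            then have e: "E (c i) w" using nz i by simp
            have "w \<in> C"
            proof (rule ccontr)
              assume "w \<notin> C" then have "i = 0" using in_out i e by blast
              then show False using l by simp
            qed
            then obtain j where j: "j < k" "w = c j" by (auto simp: C_def)
            have "j = Suc i mod k \<or> i = Suc j mod k" using cyc i j e by simp
            then have "\<exists>l'<k div 2. j = 2*l'"
            proof
              assume a: "j = Suc i mod k"
              show ?thesis
              proof (cases "Suc i = k")
                case True then show ?thesis using a k3 by (intro exI[of _ 0]) simp
              next
                case False then have "j = 2*(l+1)" using a i l by simp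
                then show ?thesis using j \<open>even k\<close> by (intro exI[of _ "l+1"]) auto
              qed
            next
              assume a: "i = Suc j mod k"
              have "Suc j \<noteq> k" using a l by auto
              then have "j = 2*l" using a j l by simp
              then show ?thesis using j \<open>even k\<close> by (intro exI[of _ l]) auto
            qed
            then show "axis w 1 \<in> span T" using j by (intro span_base) (auto simp: T_def)
          qed
        qed
      qed
    qed
    show ?thesis using lo up cT True k3 by (simp add: skew_rank_def M_def)
  next
    case False
    have lo: "k + 1 \<le> skew_rank A"
      by (rule lower[OF og inj xn k3 cycU xadj]) (use False in auto)
    define T where "T = insert (axis (c 0) (1::real)) ((\<lambda>i. row (c i) M) ` {..<k})"
    have fT: "finite T" by (simp add: T_def)
    have cT: "card T \<le> k + 1"
      unfolding T_def using card_insert_le_m1 card_image_le[of "{..<k}" "\<lambda>i. row (c i) M"]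
      by (simp add: card_insert_if)
    have up: "rank M \<le> card T"
    proof (rule rank_le[OF fT])
      fix v
      show "row v M \<in> span T"
      proof (cases "v \<in> C")
        case False
        show ?thesis
        proof (rule row_in_span)
          fix j assume "M$v$j \<noteq> 0"
          then have "j = c 0" using out_nb False nz by simp
          then show "axis j 1 \<in> span T" by (intro span_base) (auto simp: T_def)
        qed
      next
        case True
        then obtain i where i: "i < k" "v = c i" by (auto simp: C_def)
        then show ?thesis by (intro span_base) (auto simp: T_def)
      qed
    qed
    show ?thesis using lo up cT False by (simp add: skew_rank_def M_def)
  qed
qed


lemma close_cycle:
  assumes "distinct zs" "length zs \<ge> 3"
    "\<And>i. Suc i < length zs \<Longrightarrow> E (zs!i) (zs!Suc i)"
    "E (zs!(length zs - 1)) (zs!0)"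
  shows "is_cycle E zs"
  unfolding is_cycle_def
proof (intro conjI allI impI)
  show "3 \<le> length zs" "distinct zs" using assms by auto
  fix i assume i: "i < length zs"
  show "E (zs ! i) (zs ! ((i + 1) mod length zs))"
  proof (cases "Suc i < length zs")
    case True then show ?thesis using assms(3) by simp
  next
    case False
    then have h: "Suc i = length zs" using i by simp
    then have m0: "(i + 1) mod length zs = 0" by simp
    have "i = length zs - 1" using h by simp
    then show ?thesis unfolding m0 using assms(4) by simp
  qed
qed

lemma rotate_cycle:
  assumes "is_cycle E xs"
  shows "is_cycle E (rotate p xs)"
  unfolding is_cycle_def
proof (intro conjI allI impI)
  show "3 \<le> length (rotate p xs)" "distinct (rotate p xs)" using assms by (auto simp: is_cycle_def)
  fix i assume i: "i < length (rotate p xs)"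
  define l where "l = length xs"
  have il: "i < l" using i by (simp add: l_def)
  then have l0: "0 < l" by simp
  have "E (xs ! ((p + i) mod l)) (xs ! (((p + i) mod l + 1) mod l))"
    using assms l0 unfolding is_cycle_def l_def[symmetric] by simp
  moreover have "((p + i) mod l + 1) mod l = (p + (i + 1) mod l) mod l"
    by (simp add: mod_simps)
  moreover have "(i + 1) mod l < l" using l0 by simp
  ultimately show "E (rotate p xs ! i) (rotate p xs ! ((i + 1) mod length (rotate p xs)))"
    using i by (simp add: nth_rotate l_def)
qed

lemma path_exit:
  assumes "r\<^sup>*\<^sup>* a b" "P a" "\<not> P b"
  shows "\<exists>u v. r u v \<and> P u \<and> \<not> P v"
  using assms
proof (induction rule: rtranclp_induct)
  case base then show ?case by simp
next
  case (step y z)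
  show ?case
  proof (cases "P y")
    case True then show ?thesis using step by blast
  next
    case False then show ?thesis using step by blast
  qed
qed

lemma part1:
  fixes A :: "'n::finite \<Rightarrow> 'n \<Rightarrow> bool"
  assumes og: "oriented_graph A" and k3: "k \<ge> 3" and card: "CARD('n) > k"
    and uc: "unicyclic (underlying A)" and g: "girth (underlying A) = k"
  shows "(if even k then k else k + 1) \<le> skew_rank A"
proof -
  define E where "E = underlying A"
  have sym: "\<And>u v. E u v \<longleftrightarrow> E v u" by (auto simp: E_def underlying_def)
  have irr: "\<And>u. \<not> E u u" using og by (auto simp: E_def underlying_def oriented_graph_def)
  define L where "L = {length xs | xs. is_cycle E xs}"
  have finL: "finite L"
  proof (rule finite_subset)
    show "L \<subseteq> {..CARD('n)}"
    proof
      fix n assume "n \<in> L"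
      then obtain xs where "is_cycle E xs" "n = length xs" by (auto simp: L_def)
      then have "n = card (set xs)" by (simp add: is_cycle_def distinct_card)
      also have "\<dots> \<le> CARD('n)" by (rule card_mono) auto
      finally show "n \<in> {..CARD('n)}" by simp
    qed
  qed simp
  obtain xs1 where "is_cycle E xs1" using uc unfolding unicyclic_def E_def by blast
  then have "L \<noteq> {}" by (auto simp: L_def)
  then have "Min L \<in> L" using finL by (rule Min_in[rotated])
  then obtain xs0 where xs0: "is_cycle E xs0" "length xs0 = k"
    using g by (auto simp: L_def girth_def E_def)
  have minimal: "\<And>ys. is_cycle E ys \<Longrightarrow> k \<le> length ys"
  proof -
    fix ys assume "is_cycle E ys"
    then have "length ys \<in> L" by (auto simp: L_def)
    then have "Min L \<le> length ys" using finL by (intro Min_le)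
    moreover have "k = Min L" using g by (simp add: girth_def L_def E_def)
    ultimately show "k \<le> length ys" by simp
  qed
  have nochord: "\<And>ys i j. is_cycle E ys \<Longrightarrow> length ys = k \<Longrightarrow> i < j \<Longrightarrow> j < k \<Longrightarrow> E (ys!i) (ys!j)
      \<Longrightarrow> j = Suc i \<or> (i = 0 \<and> j = k - 1)"
  proof (rule ccontr)
    fix ys i j assume ys: "is_cycle E ys" "length ys = k" and ij: "i < j" "j < k" and e: "E (ys!i) (ys!j)"
      and nc: "\<not> (j = Suc i \<or> (i = 0 \<and> j = k - 1))"
    define zs where "zs = drop i (take (Suc j) ys)"
    have lz: "length zs = Suc j - i" using ij ys by (simp add: zs_def)
    have nz: "\<And>l. l < Suc j - i \<Longrightarrow> zs ! l = ys ! (i + l)" using ij ys by (simp add: zs_def)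
    have "is_cycle E zs"
    proof (rule close_cycle)
      show "distinct zs" using ys by (simp add: zs_def is_cycle_def)
      show "3 \<le> length zs" using lz nc ij by arith
      fix l assume l: "Suc l < length zs"
      have il: "i + l < k" "Suc (i+l) < k" using ij l lz by linarith+
      have "E (ys ! (i + l)) (ys ! (Suc (i + l) mod k))" using ys(1) il(1) ys(2) unfolding is_cycle_def by auto
      then have "E (ys ! (i + l)) (ys ! (i + Suc l))" using il(2) by simp
      then show "E (zs ! l) (zs ! Suc l)" using nz l lz by simp
    next
      show "E (zs ! (length zs - 1)) (zs ! 0)" using nz lz e sym ij by simp
    qed
    then have "k \<le> length zs" by (rule minimal)
    then show False using lz nc ij by arith
  qed
  have cycfull: "\<And>ys i j. is_cycle E ys \<Longrightarrow> length ys = k \<Longrightarrow> i < k \<Longrightarrow> j < k \<Longrightarrow>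
      E (ys!i) (ys!j) \<longleftrightarrow> (j = Suc i mod k \<or> i = Suc j mod k)"
  proof -
    fix ys i j assume ys: "is_cycle E ys" "length ys = k" and ij: "i < k" "j < k"
    have adj: "\<And>a. a < k \<Longrightarrow> E (ys!a) (ys!(Suc a mod k))" using ys unfolding is_cycle_def by simp
    show "E (ys!i) (ys!j) \<longleftrightarrow> (j = Suc i mod k \<or> i = Suc j mod k)"
    proof
      assume e: "E (ys!i) (ys!j)"
      have "i \<noteq> j" using e irr by auto
      then consider "i < j" | "j < i" by linarith
      then show "j = Suc i mod k \<or> i = Suc j mod k"
      proof cases
        case 1
        have "j = Suc i \<or> (i = 0 \<and> j = k - 1)" by (rule nochord[OF ys 1 ij(2) e])
        then show ?thesis using ij k3 by auto
      next
        case 2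
        have e': "E (ys!j) (ys!i)" using e sym by blast
        have "i = Suc j \<or> (j = 0 \<and> i = k - 1)" by (rule nochord[OF ys 2 ij(1) e'])
        then show ?thesis using ij k3 by auto
      qed
    next
      assume "j = Suc i mod k \<or> i = Suc j mod k"
      then show "E (ys!i) (ys!j)" using adj ij sym by auto
    qed
  qed
  have "card (set xs0) = k" using xs0 by (simp add: is_cycle_def distinct_card)
  then have "set xs0 \<noteq> UNIV" using card by auto
  then obtain y where y: "y \<notin> set xs0" by blast
  have k0: "0 < k" using k3 by simp
  have "E\<^sup>*\<^sup>* (xs0!0) y" using uc unfolding unicyclic_def connected_graph_def E_def by blast
  moreover have "xs0!0 \<in> set xs0" using xs0 k0 by simp
  ultimately obtain u x where ux: "E u x" "u \<in> set xs0" "x \<notin> set xs0"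
    using path_exit[of E "xs0!0" y "\<lambda>v. v \<in> set xs0"] y by blast
  then obtain p where p: "p < k" "u = xs0 ! p" using xs0 by (auto simp: in_set_conv_nth)
  define ys where "ys = rotate p xs0"
  have ys: "is_cycle E ys" "length ys = k" using rotate_cycle xs0 by (auto simp: ys_def)
  have ys0: "ys ! 0 = u" using p xs0 k0 by (simp add: ys_def nth_rotate)
  have xn: "x \<notin> set ys" using ux by (simp add: ys_def)
  have dys: "distinct ys" using ys by (simp add: is_cycle_def)
  have xadj: "\<And>j. j < k \<Longrightarrow> E x (ys!j) \<longleftrightarrow> j = 0"
  proof -
    fix j assume j: "j < k"
    show "E x (ys!j) \<longleftrightarrow> j = 0"
    proof
      assume e: "E x (ys!j)"
      show "j = 0"
      proof (rule ccontr)
        assume j0: "j \<noteq> 0"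
        define zs where "zs = x # take (Suc j) ys"
        have lz: "length zs = j + 2" using j ys by (simp add: zs_def)
        have zc: "is_cycle E zs"
        proof (rule close_cycle)
          show "distinct zs" using dys xn by (auto simp: zs_def dest: in_set_takeD)
          show "3 \<le> length zs" using lz j0 by simp
          fix l assume l: "Suc l < length zs"
          show "E (zs ! l) (zs ! Suc l)"
          proof (cases l)
            case 0 then show ?thesis using ux ys0 sym j by (simp add: zs_def)
          next
            case (Suc l')
            have il: "l' < k" "Suc l' < k" using l lz j Suc by linarith+
            have "E (ys ! l') (ys ! (Suc l' mod k))" using ys(1) il(1) ys(2) unfolding is_cycle_def by auto
            then have "E (ys ! l') (ys ! Suc l')" using il(2) by simp
            then show ?thesis using Suc l lz j ys by (simp add: zs_def)
          qed
        next
          show "E (zs ! (length zs - 1)) (zs ! 0)" using lz e sym j by (simp add: zs_def)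
        qed
        have "{x, ys!0} \<in> cycle_edges zs"
          unfolding cycle_edges_def using lz by (auto intro!: exI[of _ 0] simp: zs_def)
        moreover have "{x, ys!0} \<notin> cycle_edges ys"
        proof
          assume "{x, ys!0} \<in> cycle_edges ys"
          then obtain a where a: "a < length ys" "{x, ys!0} = {ys ! a, ys ! ((a + 1) mod length ys)}"
            unfolding cycle_edges_def by blast
          have pos: "0 < length ys" using a(1) by linarith
          have "(a + 1) mod length ys < length ys" using pos by (rule mod_less_divisor)
          then have "ys ! a \<in> set ys" "ys ! ((a + 1) mod length ys) \<in> set ys" using a(1) by (auto intro!: nth_mem simp del: mod_less_divisor)
          moreover have "x \<in> {ys ! a, ys ! ((a + 1) mod length ys)}" using a(2) by blast
          ultimately show False using xn by auto
        qed
        moreover have "cycle_edges zs = cycle_edges ys"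
          using uc zc ys(1) unfolding unicyclic_def E_def by blast
        ultimately show False by simp
      qed
    next
      assume "j = 0" then show "E x (ys!j)" using ux ys0 sym by simp
    qed
  qed
  have inj: "inj_on (nth ys) {..<k}" using dys ys by (intro inj_on_nth) auto
  have xn': "x \<notin> (nth ys) ` {..<k}" using xn ys by auto
  have cycU: "\<And>i j. i<k \<Longrightarrow> j<k \<Longrightarrow> underlying A (ys!i) (ys!j) \<longleftrightarrow> (j = Suc i mod k \<or> i = Suc j mod k)"
    using cycfull[OF ys] by (simp add: E_def)
  have xadjU: "\<And>j. j<k \<Longrightarrow> underlying A x (ys!j) \<longleftrightarrow> j = 0" using xadj by (simp add: E_def)
  show ?thesis
  proof (cases "even k")
    case True
    have "k - 1 + 1 \<le> skew_rank A"
      by (rule lower[OF og inj xn' k3 cycU xadjU]) (use True k3 in auto)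
    then show ?thesis using True k3 by simp
  next
    case False
    have "k + 1 \<le> skew_rank A"
      by (rule lower[OF og inj xn' k3 cycU xadjU]) (use False in auto)
    then show ?thesis using False by simp
  qed
qed

theorem theorem4p3:
  fixes k :: nat
  assumes "k \<ge> 3" and "CARD('n::finite) > k"
  shows "(\<forall>A :: 'n \<Rightarrow> 'n \<Rightarrow> bool.
            oriented_graph A \<and> unicyclic (underlying A) \<and> girth (underlying A) = k \<longrightarrow>
            skew_rank A \<ge> (if even k then k else k + 1))
       \<and> (\<forall>A :: 'n \<Rightarrow> 'n \<Rightarrow> bool.
            oriented_graph A \<and> cycle_with_pendants_at_one_vertex (underlying A) k \<longrightarrow>
            skew_rank A = (if even k then k else k + 1))"
  using part1[OF _ assms] part2[OF _ assms] by blast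

end
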